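(* For every finite ultrametric space $(X,d)$ with $|X|\geqslant 2$ the following are equivalent: (i) $(X,d)\in\mathfrak U$; (ii) for every $r\in\operatorname{Sp}(X)$ the graph $G'_{r,X}$ is complete bipartite.
   Context: For a metric space $(X,d)$, $\operatorname{Sp}(X)=\{d(x,y): x,y\in X,\ x\neq y\}$. $\mathfrak U$ denotes the class of finite ultrametric spaces $X$ with $|\operatorname{Sp}(X)|=|X|-1$. For $r\in\operatorname{Sp}(X)$, $G_{r,X}$ is the graph with vertex set $X$ in which $\{u,v\}$ is an edge iff $d(u,v)=r$. For a nonempty graph $G=(V,E)$, $G'$ denotes the subgraph induced by $V$ minus the set of isolated vertices of $G$. A complete bipartite graph is a nonempty graph whose vertex set is partitioned into two disjoint sets such that no edge joins vertices of the same set and any two vertices from different sets are adjacent. *)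

theory Defs
  imports Complex_Main
begin

definition metric_on :: "'a set \<Rightarrow> ('a \<Rightarrow> 'a \<Rightarrow> real) \<Rightarrow> bool" where
  "metric_on X d \<longleftrightarrow>
     (\<forall>x\<in>X. \<forall>y\<in>X. d x y \<ge> 0 \<and> (d x y = 0 \<longleftrightarrow> x = y) \<and> d x y = d y x) \<and>
     (\<forall>x\<in>X. \<forall>y\<in>X. \<forall>z\<in>X. d x z \<le> d x y + d y z)"

definition ultrametric_on :: "'a set \<Rightarrow> ('a \<Rightarrow> 'a \<Rightarrow> real) \<Rightarrow> bool" where
  "ultrametric_on X d \<longleftrightarrow> metric_on X d \<and>
     (\<forall>x\<in>X. \<forall>y\<in>X. \<forall>z\<in>X. d x z \<le> max (d x y) (d y z))"

definition Sp :: "'a set \<Rightarrow> ('a \<Rightarrow> 'a \<Rightarrow> real) \<Rightarrow> real set" where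
  "Sp X d = {d x y | x y. x \<in> X \<and> y \<in> X \<and> x \<noteq> y}"

definition in_U :: "'a set \<Rightarrow> ('a \<Rightarrow> 'a \<Rightarrow> real) \<Rightarrow> bool" where
  "in_U X d \<longleftrightarrow> finite X \<and> ultrametric_on X d \<and> card (Sp X d) = card X - 1"

text \<open>Simple graphs as pairs (V, E) with E a set of 2-element subsets of V.\<close>
type_synonym 'a graph = "'a set \<times> 'a set set"

definition G_graph :: "real \<Rightarrow> 'a set \<Rightarrow> ('a \<Rightarrow> 'a \<Rightarrow> real) \<Rightarrow> 'a graph" where
  "G_graph r X d = (X, {{u, v} | u v. u \<in> X \<and> v \<in> X \<and> u \<noteq> v \<and> d u v = r})"

definition isolated_vertices :: "'a graph \<Rightarrow> 'a set" where
  "isolated_vertices G = {v \<in> fst G. \<forall>e\<in>snd G. v \<notin> e}"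

definition G_prime :: "'a graph \<Rightarrow> 'a graph" where
  "G_prime G = (let W = fst G - isolated_vertices G in (W, {e \<in> snd G. e \<subseteq> W}))"

definition complete_bipartite :: "'a graph \<Rightarrow> bool" where
  "complete_bipartite G \<longleftrightarrow> snd G \<noteq> {} \<and>
     (\<exists>A B. A \<inter> B = {} \<and> A \<union> B = fst G \<and>
        (\<forall>e\<in>snd G. \<not> e \<subseteq> A \<and> \<not> e \<subseteq> B) \<and>
        (\<forall>a\<in>A. \<forall>b\<in>B. {a, b} \<in> snd G))"

end

theory Submission
  imports Defs
begin

lemma um_basic:
  assumes "ultrametric_on Y d" "x\<in>Y" "y\<in>Y"
  shows "d x y \<ge> 0" "d x x = 0" "d x y = d y x" "x\<noteq>y \<Longrightarrow> d x y > 0"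
    "z\<in>Y \<Longrightarrow> d x z \<le> max (d x y) (d y z)"
proof -
  have m: "\<forall>x\<in>Y. \<forall>y\<in>Y. d x y \<ge> 0 \<and> (d x y = 0 \<longleftrightarrow> x = y) \<and> d x y = d y x"
    and u: "\<forall>x\<in>Y. \<forall>y\<in>Y. \<forall>z\<in>Y. d x z \<le> max (d x y) (d y z)"
    using assms(1) unfolding ultrametric_on_def metric_on_def by blast+
  show "d x y \<ge> 0" using m assms(2,3) by blast
  show "d x x = 0" using m assms(2) by blast
  show "d x y = d y x" using m assms(2,3) by blast
  show "x\<noteq>y \<Longrightarrow> d x y > 0" using m assms(2,3) by force
  show "z\<in>Y \<Longrightarrow> d x z \<le> max (d x y) (d y z)" using u assms(2,3) by blast
qed

lemma um_mono: "ultrametric_on Y d \<Longrightarrow> B \<subseteq> Y \<Longrightarrow> ultrametric_on B d"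
  unfolding ultrametric_on_def metric_on_def by blast

lemma Sp_mono: "B \<subseteq> Y \<Longrightarrow> Sp B d \<subseteq> Sp Y d"
  unfolding Sp_def by blast

lemma Sp_fin: "finite Y \<Longrightarrow> finite (Sp Y d)"
proof -
  assume "finite Y"
  have "Sp Y d \<subseteq> (\<lambda>(x,y). d x y) ` (Y\<times>Y)" unfolding Sp_def by auto
  thus ?thesis using \<open>finite Y\<close> finite_subset by blast
qed

lemma Sp_single: "Sp {x} d = {}" unfolding Sp_def by auto

definition edges :: "real \<Rightarrow> 'a set \<Rightarrow> ('a \<Rightarrow> 'a \<Rightarrow> real) \<Rightarrow> 'a set set" where
  "edges r Y d = {{u, v} | u v. u \<in> Y \<and> v \<in> Y \<and> u \<noteq> v \<and> d u v = r}"

lemma Gp_simp: "G_prime (G_graph r Y d) = (\<Union>(edges r Y d), edges r Y d)"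
  unfolding G_prime_def isolated_vertices_def G_graph_def Let_def edges_def
  by auto

lemma cb_simp: "complete_bipartite (\<Union>E, E) \<longleftrightarrow> E \<noteq> {} \<and>
     (\<exists>A B. A \<inter> B = {} \<and> A \<union> B = \<Union>E \<and>
        (\<forall>e\<in>E. \<not> e \<subseteq> A \<and> \<not> e \<subseteq> B) \<and>
        (\<forall>a\<in>A. \<forall>b\<in>B. {a, b} \<in> E))"
  unfolding complete_bipartite_def by simp

lemma edge_dist:
  assumes "ultrametric_on Y d" "{p,q} \<in> edges r Y d" "p \<in> Y" "q \<in> Y"
  shows "d p q = r"
proof -
  obtain u v where "{p,q} = {u,v}" "u\<in>Y" "v\<in>Y" "d u v = r" using assms(2) unfolding edges_def by blast
  hence "(p = u \<and> q = v) \<or> (p = v \<and> q = u)" by (simp add: doubleton_eq_iff)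
  thus ?thesis using um_basic(3)[OF assms(1) \<open>u\<in>Y\<close> \<open>v\<in>Y\<close>] \<open>d u v = r\<close> by auto
qed

lemma edge_in: "p\<in>Y \<Longrightarrow> q\<in>Y \<Longrightarrow> p\<noteq>q \<Longrightarrow> d p q = r \<Longrightarrow> {p,q} \<in> edges r Y d"
  unfolding edges_def by blast

locale usplit =
  fixes Y :: "'a set" and d :: "'a \<Rightarrow> 'a \<Rightarrow> real" and x0 :: 'a
  assumes fin: "finite Y" and um: "ultrametric_on Y d" and x0: "x0 \<in> Y" and c2: "card Y \<ge> 2"
begin

definition "D = Max (Sp Y d)"
definition "B1 = {y\<in>Y. d x0 y < D}"
definition "B2 = Y - B1"

lemma Sp_ne: "Sp Y d \<noteq> {}"
proof -
  have "Y \<noteq> {x0}" using c2 by auto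
  then obtain y where "y \<in> Y" "y \<noteq> x0" using x0 by blast
  thus ?thesis unfolding Sp_def using x0 by blast
qed

lemma D_in: "D \<in> Sp Y d" unfolding D_def using Sp_ne Sp_fin[OF fin] by simp

lemma D_ge: "x\<in>Y \<Longrightarrow> y\<in>Y \<Longrightarrow> d x y \<le> D"
proof -
  assume a: "x\<in>Y" "y\<in>Y"
  show ?thesis
  proof (cases "x = y")
    case True
    obtain x' y' where "x' \<in> Y" "y' \<in> Y" "x' \<noteq> y'" "D = d x' y'" using D_in unfolding Sp_def by blast
    hence "D > 0" using um_basic(4)[OF um] by simp
    thus ?thesis using True um_basic(2)[OF um a] by simp
  next
    case False
    hence "d x y \<in> Sp Y d" using a unfolding Sp_def by blast
    thus ?thesis unfolding D_def using Sp_fin[OF fin] by simp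
  qed
qed

lemma D_pos: "D > 0"
proof -
  obtain x y where "x \<in> Y" "y \<in> Y" "x \<noteq> y" "D = d x y" using D_in unfolding Sp_def by blast
  thus ?thesis using um_basic(4)[OF um] by simp
qed

lemma B_basic: "B1 \<subseteq> Y" "B2 \<subseteq> Y" "B1 \<inter> B2 = {}" "B1 \<union> B2 = Y" "x0 \<in> B1"
  unfolding B1_def B2_def using x0 um_basic(2)[OF um x0 x0] D_pos by auto

lemma in1: "a \<in> B1 \<Longrightarrow> a' \<in> B1 \<Longrightarrow> d a a' < D"
proof -
  assume a: "a \<in> B1" "a' \<in> B1"
  hence y: "a \<in> Y" "a' \<in> Y" "d x0 a < D" "d x0 a' < D" unfolding B1_def by auto
  have "d a a' \<le> max (d a x0) (d x0 a')" using um_basic(5)[OF um y(1) x0 y(2)] .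
  moreover have "d a x0 = d x0 a" using um_basic(3)[OF um y(1) x0] .
  ultimately have "d a a' \<le> d x0 a \<or> d a a' \<le> d x0 a'" by (simp add: le_max_iff_disj)
  thus ?thesis using y by linarith
qed

lemma cross: "a \<in> B1 \<Longrightarrow> b \<in> B2 \<Longrightarrow> d a b = D \<and> d b a = D"
proof -
  assume a: "a \<in> B1" "b \<in> B2"
  have ab: "a\<in>Y" "b\<in>Y" using a B_basic by auto
  have "\<not> d x0 b < D" using a(2) ab(2) unfolding B2_def B1_def by blast
  hence "d x0 b = D" using D_ge[OF x0 ab(2)] by linarith
  moreover have "d x0 a < D" using a(1) unfolding B1_def by auto
  moreover have "d x0 b \<le> max (d x0 a) (d a b)" using um_basic(5)[OF um x0 ab(1) ab(2)] .
  hence "d x0 b \<le> d x0 a \<or> d x0 b \<le> d a b" by (simp add: le_max_iff_disj)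
  ultimately have "d a b \<ge> D" by linarith
  moreover have "d a b \<le> D" using D_ge ab by blast
  ultimately have "d a b = D" by linarith
  moreover have "d b a = d a b" using um_basic(3)[OF um ab(2) ab(1)] .
  ultimately show ?thesis by simp
qed

lemma B2_ne: "B2 \<noteq> {}"
proof -
  obtain x y where xy: "x\<in>Y" "y\<in>Y" "x\<noteq>y" "D = d x y" using D_in unfolding Sp_def by blast
  show ?thesis
  proof
    assume "B2 = {}"
    hence "B1 = Y" using B_basic(4) by simp
    hence "x \<in> B1" "y \<in> B1" using xy(1,2) by blast+
    hence "d x y < D" by (rule in1)
    thus False using xy(4) by linarith
  qed
qed

lemma fins: "finite B1" "finite B2" using finite_subset[OF B_basic(1) fin] finite_subset[OF B_basic(2) fin] .

lemma cards: "card B1 < card Y" "card B2 < card Y" "card B1 + card B2 = card Y"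
  "card B1 \<ge> 1" "card B2 \<ge> 1"
proof -
  show 3: "card B1 + card B2 = card Y" using card_Un_disjoint[OF fins B_basic(3)] B_basic(4) by simp
  have "card B1 > 0" using fins(1) B_basic(5) by (auto simp: card_gt_0_iff)
  thus "card B1 \<ge> 1" by simp
  moreover show "card B2 \<ge> 1" using B2_ne fins(2) by (simp add: Suc_leI card_gt_0_iff)
  ultimately show "card B1 < card Y" "card B2 < card Y" using 3 by auto
qed

lemma ums: "ultrametric_on B1 d" "ultrametric_on B2 d" using um_mono[OF um] B_basic by auto

lemma Sp_split: "Sp Y d = insert D (Sp B1 d \<union> Sp B2 d)"
proof
  show "insert D (Sp B1 d \<union> Sp B2 d) \<subseteq> Sp Y d" using D_in Sp_mono B_basic by blast
  show "Sp Y d \<subseteq> insert D (Sp B1 d \<union> Sp B2 d)"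
  proof
    fix s assume "s \<in> Sp Y d"
    then obtain x y where xy: "x\<in>Y" "y\<in>Y" "x\<noteq>y" "s = d x y" unfolding Sp_def by blast
    show "s \<in> insert D (Sp B1 d \<union> Sp B2 d)"
    proof (cases "x \<in> B1")
      case True
      show ?thesis
      proof (cases "y \<in> B1")
        case True
        thus ?thesis using \<open>x\<in>B1\<close> xy unfolding Sp_def by blast
      next
        case False
        thus ?thesis using cross[OF True] xy B_basic by auto
      qed
    next
      case False
      hence x2: "x \<in> B2" using xy B_basic by auto
      show ?thesis
      proof (cases "y \<in> B1")
        case True
        thus ?thesis using cross[OF True x2] xy by auto
      next
        case False
        thus ?thesis using x2 xy B_basic unfolding Sp_def by blast
      qed
    qed
  qed
qed

lemma D_notin1: "D \<notin> Sp B1 d"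
proof
  assume "D \<in> Sp B1 d"
  then obtain x y where "x \<in> B1" "y \<in> B1" "D = d x y" unfolding Sp_def by blast
  thus False using in1[of x y] by simp
qed

lemma edges1: "r \<noteq> D \<Longrightarrow> r \<notin> Sp B2 d \<Longrightarrow> edges r Y d = edges r B1 d"
  unfolding edges_def
proof (intro set_eqI iffI)
  fix e assume r: "r \<noteq> D" "r \<notin> Sp B2 d" and "e \<in> {{u, v} |u v. u \<in> Y \<and> v \<in> Y \<and> u \<noteq> v \<and> d u v = r}"
  then obtain u v where uv: "e = {u,v}" "u \<in> Y" "v \<in> Y" "u \<noteq> v" "d u v = r" by blast
  have "u \<in> B1 \<and> v \<in> B1"
  proof (rule ccontr)
    assume "\<not> (u \<in> B1 \<and> v \<in> B1)"
    moreover have "\<not> (u \<in> B2 \<and> v \<in> B2)" using r(2) uv unfolding Sp_def by blast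
    moreover have "u \<in> B1 \<or> u \<in> B2" "v \<in> B1 \<or> v \<in> B2" using uv B_basic by auto
    ultimately have "d u v = D" using cross by blast
    thus False using uv r by simp
  qed
  thus "e \<in> {{u, v} |u v. u \<in> B1 \<and> v \<in> B1 \<and> u \<noteq> v \<and> d u v = r}" using uv by blast
next
  fix e assume "e \<in> {{u, v} |u v. u \<in> B1 \<and> v \<in> B1 \<and> u \<noteq> v \<and> d u v = r}"
  thus "e \<in> {{u, v} |u v. u \<in> Y \<and> v \<in> Y \<and> u \<noteq> v \<and> d u v = r}" using B_basic by blast
qed

lemma edges2: "r \<noteq> D \<Longrightarrow> r \<notin> Sp B1 d \<Longrightarrow> edges r Y d = edges r B2 d"
  unfolding edges_def
proof (intro set_eqI iffI)
  fix e assume r: "r \<noteq> D" "r \<notin> Sp B1 d" and "e \<in> {{u, v} |u v. u \<in> Y \<and> v \<in> Y \<and> u \<noteq> v \<and> d u v = r}"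
  then obtain u v where uv: "e = {u,v}" "u \<in> Y" "v \<in> Y" "u \<noteq> v" "d u v = r" by blast
  have "u \<in> B2 \<and> v \<in> B2"
  proof (rule ccontr)
    assume "\<not> (u \<in> B2 \<and> v \<in> B2)"
    moreover have "\<not> (u \<in> B1 \<and> v \<in> B1)" using r(2) uv unfolding Sp_def by blast
    moreover have "u \<in> B1 \<or> u \<in> B2" "v \<in> B1 \<or> v \<in> B2" using uv B_basic by auto
    ultimately have "d u v = D" using cross by blast
    thus False using uv r by simp
  qed
  thus "e \<in> {{u, v} |u v. u \<in> B2 \<and> v \<in> B2 \<and> u \<noteq> v \<and> d u v = r}" using uv by blast
next
  fix e assume "e \<in> {{u, v} |u v. u \<in> B2 \<and> v \<in> B2 \<and> u \<noteq> v \<and> d u v = r}"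
  thus "e \<in> {{u, v} |u v. u \<in> Y \<and> v \<in> Y \<and> u \<noteq> v \<and> d u v = r}" using B_basic by blast
qed

end


lemma card_one_cases:
  assumes "finite Y" "Y \<noteq> {}" "\<not> card Y \<ge> 2"
  obtains x where "Y = {x}"
proof -
  have "card Y \<noteq> 0" using assms(1,2) by simp
  hence "card Y = 1" using assms(3) by linarith
  thus ?thesis using that card_1_singletonE by blast
qed

lemma Sp_bound:
  "finite Y \<Longrightarrow> ultrametric_on Y d \<Longrightarrow> Y \<noteq> {} \<Longrightarrow> card (Sp Y d) \<le> card Y - 1"
proof (induction "card Y" arbitrary: Y rule: less_induct)
  case less
  show ?case
  proof (cases "card Y \<ge> 2")
    case False
    then obtain x where "Y = {x}" using less.prems card_one_cases by blast
    thus ?thesis by (simp add: Sp_single)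
  next
    case True
    obtain x0 where x0: "x0 \<in> Y" using less.prems by blast
    interpret S: usplit Y d x0 using less.prems True x0 by unfold_locales
    have ne1: "S.B1 \<noteq> {}" and ne2: "S.B2 \<noteq> {}" using S.cards(4,5) by auto
    have b1: "card (Sp S.B1 d) \<le> card S.B1 - 1"
      using less.hyps[OF S.cards(1) S.fins(1) S.ums(1) ne1] .
    have b2: "card (Sp S.B2 d) \<le> card S.B2 - 1"
      using less.hyps[OF S.cards(2) S.fins(2) S.ums(2) ne2] .
    have f: "finite (Sp S.B1 d \<union> Sp S.B2 d)" using Sp_fin S.fins by blast
    have "card (Sp Y d) \<le> Suc (card (Sp S.B1 d \<union> Sp S.B2 d))"
      unfolding S.Sp_split using f by (simp add: card_insert_if)
    also have "\<dots> \<le> Suc (card (Sp S.B1 d) + card (Sp S.B2 d))" using card_Un_le by simp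
    finally show ?thesis using b1 b2 S.cards(3,4,5) by linarith
  qed
qed

lemma cbE:
  assumes "complete_bipartite (G_prime (G_graph r Y d))"
  obtains A B where "edges r Y d \<noteq> {}" "A \<inter> B = {}" "A \<union> B = \<Union>(edges r Y d)"
     "\<And>e. e\<in>edges r Y d \<Longrightarrow> \<not> e \<subseteq> A \<and> \<not> e \<subseteq> B"
     "\<And>a b. a\<in>A \<Longrightarrow> b\<in>B \<Longrightarrow> {a, b} \<in> edges r Y d"
proof -
  have h: "edges r Y d \<noteq> {} \<and> (\<exists>A B. A \<inter> B = {} \<and> A \<union> B = \<Union>(edges r Y d) \<and>
        (\<forall>e\<in>edges r Y d. \<not> e \<subseteq> A \<and> \<not> e \<subseteq> B) \<and>
        (\<forall>a\<in>A. \<forall>b\<in>B. {a, b} \<in> edges r Y d))"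
    using assms unfolding Gp_simp cb_simp .
  then obtain A B where "edges r Y d \<noteq> {}" "A \<inter> B = {}" "A \<union> B = \<Union>(edges r Y d)"
     "\<forall>e\<in>edges r Y d. \<not> e \<subseteq> A \<and> \<not> e \<subseteq> B"
     "\<forall>a\<in>A. \<forall>b\<in>B. {a, b} \<in> edges r Y d" by (elim conjE exE) simp
  thus ?thesis using that by simp
qed

lemma cbI:
  assumes "edges r Y d \<noteq> {}" "A \<inter> B = {}" "A \<union> B = \<Union>(edges r Y d)"
     "\<And>e. e\<in>edges r Y d \<Longrightarrow> \<not> e \<subseteq> A \<and> \<not> e \<subseteq> B"
     "\<And>a b. a\<in>A \<Longrightarrow> b\<in>B \<Longrightarrow> {a, b} \<in> edges r Y d"
  shows "complete_bipartite (G_prime (G_graph r Y d))"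
  unfolding Gp_simp cb_simp
proof (intro conjI exI)
  show "edges r Y d \<noteq> {}" "A \<inter> B = {}" "A \<union> B = \<Union>(edges r Y d)" using assms(1-3) .
  show "\<forall>e\<in>edges r Y d. \<not> e \<subseteq> A \<and> \<not> e \<subseteq> B" using assms(4) by simp
  show "\<forall>a\<in>A. \<forall>b\<in>B. {a, b} \<in> edges r Y d" using assms(5) by simp
qed

lemma Gp_eq: "edges r Y d = edges r B d \<Longrightarrow> G_prime (G_graph r Y d) = G_prime (G_graph r B d)"
  unfolding Gp_simp by simp

lemma edges_sub: "e \<in> edges r Y d \<Longrightarrow> e \<subseteq> Y"
  unfolding edges_def by blast


lemma main:
  "finite Y \<Longrightarrow> ultrametric_on Y d \<Longrightarrow> Y \<noteq> {} \<Longrightarrow>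
   (card (Sp Y d) = card Y - 1 \<longleftrightarrow> (\<forall>r\<in>Sp Y d. complete_bipartite (G_prime (G_graph r Y d))))"
proof (induction "card Y" arbitrary: Y rule: less_induct)
  case less
  show ?case
  proof (cases "card Y \<ge> 2")
    case False
    then obtain x where "Y = {x}" using less.prems card_one_cases by blast
    thus ?thesis by (simp add: Sp_single)
  next
    case True
    obtain x0 where x0: "x0 \<in> Y" using less.prems by blast
    interpret S: usplit Y d x0 using less.prems True x0 by unfold_locales
    define S1 where "S1 = Sp S.B1 d"
    define S2 where "S2 = Sp S.B2 d"
    have ne1: "S.B1 \<noteq> {}" and ne2: "S.B2 \<noteq> {}" using S.cards(4,5) by auto
    have IH1: "card S1 = card S.B1 - 1 \<longleftrightarrow> (\<forall>r\<in>S1. complete_bipartite (G_prime (G_graph r S.B1 d)))"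
      unfolding S1_def using less.hyps[OF S.cards(1) S.fins(1) S.ums(1) ne1] .
    have IH2: "card S2 = card S.B2 - 1 \<longleftrightarrow> (\<forall>r\<in>S2. complete_bipartite (G_prime (G_graph r S.B2 d)))"
      unfolding S2_def using less.hyps[OF S.cards(2) S.fins(2) S.ums(2) ne2] .
    have b1: "card S1 \<le> card S.B1 - 1" unfolding S1_def using Sp_bound[OF S.fins(1) S.ums(1) ne1] .
    have b2: "card S2 \<le> card S.B2 - 1" unfolding S2_def using Sp_bound[OF S.fins(2) S.ums(2) ne2] .
    have f1: "finite S1" and f2: "finite S2" unfolding S1_def S2_def using Sp_fin S.fins by blast+
    have spl: "Sp Y d = insert S.D (S1 \<union> S2)" unfolding S1_def S2_def using S.Sp_split .
    have D1: "S.D \<notin> S1" unfolding S1_def using S.D_notin1 .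
    have cY: "card S.B1 + card S.B2 = card Y" "card S.B1 \<ge> 1" "card S.B2 \<ge> 1" using S.cards(3,4,5) .
    have cUn: "card (S1 \<union> S2) + card (S1 \<inter> S2) = card S1 + card S2" using card_Un_Int[OF f1 f2] by simp
    have sub1: "\<And>r. r \<in> S1 \<Longrightarrow> r \<in> Sp Y d" and sub2: "\<And>r. r \<in> S2 \<Longrightarrow> r \<in> Sp Y d"
      using spl by auto
    show ?thesis
    proof
      assume eq: "card (Sp Y d) = card Y - 1"
      have nD2: "S.D \<notin> S2"
      proof
        assume "S.D \<in> S2"
        hence "Sp Y d = S1 \<union> S2" using spl by auto
        hence "card (Sp Y d) \<le> card S1 + card S2" using cUn by simp
        thus False using eq b1 b2 cY by linarith
      qed
      have disj: "S1 \<inter> S2 = {}"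
      proof (rule ccontr)
        assume "S1 \<inter> S2 \<noteq> {}"
        hence "card (S1 \<inter> S2) \<ge> 1" using f1 by (simp add: Suc_leI card_gt_0_iff)
        moreover have "card (Sp Y d) \<le> Suc (card (S1 \<union> S2))" using spl f1 f2 by (simp add: card_insert_if)
        ultimately show False using eq b1 b2 cY cUn by linarith
      qed
      have "card (Sp Y d) = Suc (card S1 + card S2)"
        using spl D1 nD2 f1 f2 cUn disj by (simp add: card_insert_if)
      hence "card S1 = card S.B1 - 1" "card S2 = card S.B2 - 1" using eq b1 b2 cY by linarith+
      hence P1: "\<forall>r\<in>S1. complete_bipartite (G_prime (G_graph r S.B1 d))"
        and P2: "\<forall>r\<in>S2. complete_bipartite (G_prime (G_graph r S.B2 d))" using IH1 IH2 by blast+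
      show "\<forall>r\<in>Sp Y d. complete_bipartite (G_prime (G_graph r Y d))"
      proof
        fix r assume r: "r \<in> Sp Y d"
        hence "r = S.D \<or> r \<in> S1 \<or> r \<in> S2" using spl by auto
        moreover
        { assume rD: "r = S.D"
          obtain b where b: "b \<in> S.B2" using ne2 by blast
          have x0B: "x0 \<in> S.B1" using S.B_basic(5) .
          have Bsub: "S.B1 \<subseteq> Y" "S.B2 \<subseteq> Y" using S.B_basic(1,2) .
          have dj: "S.B1 \<inter> S.B2 = {}" using S.B_basic(3) .
          have cr: "\<And>a b. a \<in> S.B1 \<Longrightarrow> b \<in> S.B2 \<Longrightarrow> {a, b} \<in> edges S.D Y d"
          proof -
            fix a b assume ab: "a \<in> S.B1" "b \<in> S.B2"
            have "a \<noteq> b" using ab dj by blast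
            moreover have "d a b = S.D" using S.cross[OF ab] by simp
            ultimately show "{a, b} \<in> edges S.D Y d" using edge_in[of a Y b d S.D] ab Bsub by blast
          qed
          have "complete_bipartite (G_prime (G_graph S.D Y d))"
          proof (rule cbI[where A = S.B1 and B = S.B2])
            show "edges S.D Y d \<noteq> {}" using cr[OF x0B b] by blast
            show "S.B1 \<inter> S.B2 = {}" using dj .
            show "S.B1 \<union> S.B2 = \<Union>(edges S.D Y d)"
            proof
              show "S.B1 \<union> S.B2 \<subseteq> \<Union>(edges S.D Y d)"
              proof
                fix v assume "v \<in> S.B1 \<union> S.B2"
                thus "v \<in> \<Union>(edges S.D Y d)"
                proof
                  assume "v \<in> S.B1" thus ?thesis using cr[of v b] b by blast
                next
                  assume "v \<in> S.B2" thus ?thesis using cr[of x0 v] x0B by blast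
                qed
              qed
              show "\<Union>(edges S.D Y d) \<subseteq> S.B1 \<union> S.B2" using edges_sub S.B_basic(4) by blast
            qed
            show "\<And>e. e \<in> edges S.D Y d \<Longrightarrow> \<not> e \<subseteq> S.B1 \<and> \<not> e \<subseteq> S.B2"
            proof -
              fix e assume "e \<in> edges S.D Y d"
              then obtain u v where uv: "e = {u,v}" "u \<in> Y" "v \<in> Y" "u \<noteq> v" "d u v = S.D"
                unfolding edges_def by blast
              have "\<not> (u \<in> S.B1 \<and> v \<in> S.B1)" using S.in1[of u v] uv(5) by auto
              moreover have "\<not> (u \<in> S.B2 \<and> v \<in> S.B2)"
              proof
                assume "u \<in> S.B2 \<and> v \<in> S.B2"
                hence "d u v \<in> S2" unfolding S2_def Sp_def using uv(4) by blast
                thus False using nD2 uv(5) by simp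
              qed
              ultimately show "\<not> e \<subseteq> S.B1 \<and> \<not> e \<subseteq> S.B2" using uv(1) by simp
            qed
            show "\<And>a b. a \<in> S.B1 \<Longrightarrow> b \<in> S.B2 \<Longrightarrow> {a, b} \<in> edges S.D Y d" using cr .
          qed
          hence "complete_bipartite (G_prime (G_graph r Y d))" using rD by simp }
        moreover
        { assume r1: "r \<in> S1"
          have "r \<noteq> S.D" using r1 D1 by blast
          moreover have "r \<notin> Sp S.B2 d" using r1 disj unfolding S2_def by blast
          ultimately have "G_prime (G_graph r Y d) = G_prime (G_graph r S.B1 d)"
            using S.edges1 Gp_eq by metis
          hence "complete_bipartite (G_prime (G_graph r Y d))" using P1 r1 by simp }
        moreover
        { assume r2: "r \<in> S2"
          have "r \<noteq> S.D" using r2 nD2 by blast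
          moreover have "r \<notin> Sp S.B1 d" using r2 disj unfolding S1_def by blast
          ultimately have "G_prime (G_graph r Y d) = G_prime (G_graph r S.B2 d)"
            using S.edges2 Gp_eq by metis
          hence "complete_bipartite (G_prime (G_graph r Y d))" using P2 r2 by simp }
        ultimately show "complete_bipartite (G_prime (G_graph r Y d))" by blast
      qed
    next
      assume P: "\<forall>r\<in>Sp Y d. complete_bipartite (G_prime (G_graph r Y d))"
      have Bsub: "S.B1 \<subseteq> Y" "S.B2 \<subseteq> Y" using S.B_basic(1,2) .
      have dj: "S.B1 \<inter> S.B2 = {}" using S.B_basic(3) .
      have x0B: "x0 \<in> S.B1" using S.B_basic(5) .
      have nD2: "S.D \<notin> S2"
      proof
        assume "S.D \<in> S2"
        then obtain b b' where bb: "b \<in> S.B2" "b' \<in> S.B2" "b \<noteq> b'" "S.D = d b b'"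
          unfolding S2_def Sp_def by blast
        have "complete_bipartite (G_prime (G_graph S.D Y d))" using P S.D_in by blast
        then obtain A B where AB: "A \<inter> B = {}" "A \<union> B = \<Union>(edges S.D Y d)"
           "\<And>e. e\<in>edges S.D Y d \<Longrightarrow> \<not> e \<subseteq> A \<and> \<not> e \<subseteq> B"
          by (rule cbE) blast
        have x0b: "x0 \<noteq> b" "x0 \<noteq> b'" using x0B bb dj by blast+
        have e1: "{x0, b} \<in> edges S.D Y d"
          using edge_in[of x0 Y b d S.D] x0 bb Bsub x0b S.cross[OF x0B bb(1)] by blast
        have e2: "{x0, b'} \<in> edges S.D Y d"
          using edge_in[of x0 Y b' d S.D] x0 bb Bsub x0b S.cross[OF x0B bb(2)] by blast
        have e3: "{b, b'} \<in> edges S.D Y d"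
          using edge_in[of b Y b' d S.D] bb Bsub by auto
        have n1: "\<not> {x0, b} \<subseteq> A" "\<not> {x0, b} \<subseteq> B" using AB(3)[OF e1] by auto
        have n2: "\<not> {x0, b'} \<subseteq> A" "\<not> {x0, b'} \<subseteq> B" using AB(3)[OF e2] by auto
        have n3: "\<not> {b, b'} \<subseteq> A" "\<not> {b, b'} \<subseteq> B" using AB(3)[OF e3] by auto
        have "x0 \<in> A \<union> B" "b \<in> A \<union> B" "b' \<in> A \<union> B" using AB(2) e1 e2 by blast+
        thus False using n1 n2 n3 by auto
      qed
      have disj: "S1 \<inter> S2 = {}"
      proof (rule ccontr)
        assume "S1 \<inter> S2 \<noteq> {}"
        then obtain r where r: "r \<in> S1" "r \<in> S2" by blast
        then obtain a a' where aa: "a \<in> S.B1" "a' \<in> S.B1" "a \<noteq> a'" "r = d a a'"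
          unfolding S1_def Sp_def by blast
        obtain b b' where bb: "b \<in> S.B2" "b' \<in> S.B2" "b \<noteq> b'" "r = d b b'"
          using r(2) unfolding S2_def Sp_def by blast
        have rD: "r \<noteq> S.D" using r(1) D1 by blast
        have "complete_bipartite (G_prime (G_graph r Y d))" using P sub1 r(1) by blast
        then obtain A B where AB: "A \<inter> B = {}" "A \<union> B = \<Union>(edges r Y d)"
           "\<And>e. e\<in>edges r Y d \<Longrightarrow> \<not> e \<subseteq> A \<and> \<not> e \<subseteq> B"
           "\<And>a b. a\<in>A \<Longrightarrow> b\<in>B \<Longrightarrow> {a, b} \<in> edges r Y d"
          by (rule cbE) blast
        have e1: "{a, a'} \<in> edges r Y d"
          using edge_in[of a Y a' d r] aa Bsub by auto
        have e2: "{b, b'} \<in> edges r Y d"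
          using edge_in[of b Y b' d r] bb Bsub by auto
        have n1: "\<not> {a, a'} \<subseteq> A" "\<not> {a, a'} \<subseteq> B" using AB(3)[OF e1] by auto
        have n2: "\<not> {b, b'} \<subseteq> A" "\<not> {b, b'} \<subseteq> B" using AB(3)[OF e2] by auto
        have m: "a \<in> A \<union> B" "a' \<in> A \<union> B" "b \<in> A \<union> B" "b' \<in> A \<union> B" using AB(2) e1 e2 by blast+
        have "\<exists>p. p \<in> S.B1 \<and> p \<in> A" using m(1,2) n1 aa(1,2) by auto
        then obtain p where p: "p \<in> S.B1" "p \<in> A" by blast
        have "\<exists>q. q \<in> S.B2 \<and> q \<in> B" using m(3,4) n2 bb(1,2) by auto
        then obtain q where q: "q \<in> S.B2" "q \<in> B" by blast
        have "{p, q} \<in> edges r Y d" using AB(4) p q by blast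
        hence "d p q = r" using edge_dist[OF less.prems(2)] p q Bsub by blast
        moreover have "d p q = S.D" using S.cross[OF p(1) q(1)] by simp
        ultimately show False using rD by simp
      qed
      have "\<forall>r\<in>S1. complete_bipartite (G_prime (G_graph r S.B1 d))"
      proof
        fix r assume r1: "r \<in> S1"
        have "r \<noteq> S.D" using r1 D1 by blast
        moreover have "r \<notin> Sp S.B2 d" using r1 disj unfolding S2_def by blast
        ultimately have "G_prime (G_graph r Y d) = G_prime (G_graph r S.B1 d)"
          using S.edges1 Gp_eq by metis
        moreover have "complete_bipartite (G_prime (G_graph r Y d))" using P sub1[OF r1] by blast
        ultimately show "complete_bipartite (G_prime (G_graph r S.B1 d))" by metis
      qed
      hence c1: "card S1 = card S.B1 - 1" using IH1 by blast
      have "\<forall>r\<in>S2. complete_bipartite (G_prime (G_graph r S.B2 d))"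
      proof
        fix r assume r2: "r \<in> S2"
        have "r \<noteq> S.D" using r2 nD2 by blast
        moreover have "r \<notin> Sp S.B1 d" using r2 disj unfolding S1_def by blast
        ultimately have "G_prime (G_graph r Y d) = G_prime (G_graph r S.B2 d)"
          using S.edges2 Gp_eq by metis
        moreover have "complete_bipartite (G_prime (G_graph r Y d))" using P sub2[OF r2] by blast
        ultimately show "complete_bipartite (G_prime (G_graph r S.B2 d))" by metis
      qed
      hence c2: "card S2 = card S.B2 - 1" using IH2 by blast
      have "card (Sp Y d) = Suc (card S1 + card S2)"
        using spl D1 nD2 f1 f2 cUn disj by (simp add: card_insert_if)
      thus "card (Sp Y d) = card Y - 1" using c1 c2 cY by linarith
    qed
  qed
qed


theorem theorem8:
  fixes X :: "'a set" and d :: "'a \<Rightarrow> 'a \<Rightarrow> real"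
  assumes "finite X" and "ultrametric_on X d" and "card X \<ge> 2"
  shows "in_U X d \<longleftrightarrow> (\<forall>r\<in>Sp X d. complete_bipartite (G_prime (G_graph r X d)))"
proof -
  have "X \<noteq> {}" using assms(3) by auto
  thus ?thesis unfolding in_U_def using main[OF assms(1,2)] assms(1,2) by simp
qed

end
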